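(* Let $E$ be a finite-dimensional complex Hilbert space, $e\in E$ a unit vector, $\tau\in(0,1)$, and let $T_0\in B(E)_+$ be strictly positive. Define $$T_{n+1}:=T_n^{1/2}\bigl(I_E-\tau|e\rangle\langle e|\bigr)T_n^{1/2}\qquad(n\ge0),$$ and $T_\infty:=\lim_nT_n$. Let $\mathcal{K}$ be the maximal $T_0$-reducing subspace contained in $e^\perp$, and assume $\dim\mathcal{K}^\perp=2$. Then, with respect to $E=\mathcal{K}\oplus\mathcal{K}^\perp$, $$T_\infty=T_0|_{\mathcal{K}}\oplus0.$$
   Context: For vectors $x,y$, $|x\rangle\langle y|$ denotes the operator $z\mapsto\langle y,z\rangle x$. $B(E)_+$ denotes positive operators; $T^{1/2}$ is the positive square root. A subspace reduces an operator if it and its orthogonal complement are invariant. The sequence $(T_n)$ is decreasing in the operator order, so the norm limit exists. *)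

theory Defs
  imports "HOL-Analysis.Analysis"
begin

text \<open>The finite-dimensional complex Hilbert space E is modelled as complex^'n
  (with 'n a finite index type); operators on E are matrices complex^'n^'n acting by *v.\<close>

definition cinner :: "complex^'n \<Rightarrow> complex^'n \<Rightarrow> complex" where
  "cinner x y = (\<Sum>i\<in>UNIV. cnj (x$i) * y$i)"

text \<open>The rank-one operator |x><y| : z maps to <y,z> x.\<close>
definition ketbra :: "complex^'n \<Rightarrow> complex^'n \<Rightarrow> complex^'n^'n" where
  "ketbra x y = (\<chi> i j. x$i * cnj (y$j))"

definition orth :: "(complex^'n) set \<Rightarrow> (complex^'n) set" where
  "orth M = {x. \<forall>y\<in>M. cinner y x = 0}"

definition pos_op :: "complex^'n^'n \<Rightarrow> bool" where
  "pos_op A \<longleftrightarrow> (\<forall>x. Im (cinner x (A *v x)) = 0 \<and> Re (cinner x (A *v x)) \<ge> 0)"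

definition strictly_pos_op :: "complex^'n^'n \<Rightarrow> bool" where
  "strictly_pos_op A \<longleftrightarrow> pos_op A \<and> (\<forall>x. x \<noteq> 0 \<longrightarrow> Re (cinner x (A *v x)) > 0)"

definition psqrt :: "complex^'n^'n \<Rightarrow> complex^'n^'n" where
  "psqrt A = (THE S. pos_op S \<and> S ** S = A)"

definition reduces :: "complex^'n^'n \<Rightarrow> (complex^'n) set \<Rightarrow> bool" where
  "reduces T M \<longleftrightarrow> vec.subspace M \<and> (\<lambda>x. T *v x) ` M \<subseteq> M
      \<and> (\<lambda>x. T *v x) ` orth M \<subseteq> orth M"

definition max_reducing :: "complex^'n^'n \<Rightarrow> (complex^'n) set \<Rightarrow> (complex^'n) set" where
  "max_reducing T S = (THE K. reduces T K \<and> K \<subseteq> S \<and>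
      (\<forall>M. reduces T M \<and> M \<subseteq> S \<longrightarrow> M \<subseteq> K))"

end

theory Submission
  imports Defs
begin

lemma scaleR_vec_as_s: "r *\<^sub>R (x::complex^'n) = complex_of_real r *s x"
  unfolding vec_eq_iff vector_scalar_mult_def by (simp add: scaleR_conv_of_real[where 'a=complex])

lemma cinner_add_right: "cinner x (y + z) = cinner x y + cinner x z"
  by (simp add: cinner_def distrib_left sum.distrib)
lemma cinner_add_left: "cinner (x + y) z = cinner x z + cinner y z"
  by (simp add: cinner_def distrib_right sum.distrib)
lemma cinner_diff_right: "cinner x (y - z) = cinner x y - cinner x z"
  by (simp add: cinner_def right_diff_distrib sum_subtractf)
lemma cinner_diff_left: "cinner (x - y) z = cinner x z - cinner y z"
  by (simp add: cinner_def left_diff_distrib sum_subtractf)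
lemma cinner_scale_right: "cinner x (c *s y) = c * cinner x y"
  by (simp add: cinner_def sum_distrib_left algebra_simps)
lemma cinner_scale_left: "cinner (c *s x) y = cnj c * cinner x y"
  by (simp add: cinner_def sum_distrib_left algebra_simps)
lemma cinner_scaleR_right: "cinner x (r *\<^sub>R y) = of_real r * cinner x y"
  by (simp add: scaleR_vec_as_s cinner_scale_right)
lemma cinner_scaleR_left: "cinner (r *\<^sub>R x) y = of_real r * cinner x y"
  by (simp add: scaleR_vec_as_s cinner_scale_left)
lemma cinner_zero_right[simp]: "cinner x 0 = 0"
  by (simp add: cinner_def)
lemma cinner_zero_left[simp]: "cinner 0 x = 0"
  by (simp add: cinner_def)
lemma cinner_minus_right: "cinner x (- y) = - cinner x y"
  by (simp add: cinner_def sum_negf)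
lemma cinner_minus_left: "cinner (- x) y = - cinner x y"
  by (simp add: cinner_def sum_negf)
lemma cinner_sum_right: "cinner x (sum f A) = (\<Sum>a\<in>A. cinner x (f a))"
  by (induction A rule: infinite_finite_induct) (auto simp: cinner_add_right)
lemma cinner_sum_left: "cinner (sum f A) x = (\<Sum>a\<in>A. cinner (f a) x)"
  by (induction A rule: infinite_finite_induct) (auto simp: cinner_add_left)
lemma cinner_commute: "cinner y x = cnj (cinner x y)"
  by (simp add: cinner_def mult.commute)

lemmas cinner_simps = cinner_add_right cinner_add_left cinner_diff_right cinner_diff_left
  cinner_scale_right cinner_scale_left cinner_scaleR_right cinner_scaleR_left
  cinner_minus_right cinner_minus_left

lemma cinner_self: "cinner x x = complex_of_real ((norm x)^2)"
proof -
  have "cinner x x = (\<Sum>i\<in>UNIV. complex_of_real ((cmod (x$i))^2))"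
    unfolding cinner_def by (intro sum.cong refl) (metis complex_norm_square mult.commute)
  also have "\<dots> = complex_of_real (\<Sum>i\<in>UNIV. (cmod (x$i))^2)" by simp
  also have "(\<Sum>i\<in>UNIV. (cmod (x$i))^2) = (norm x)^2"
    unfolding norm_vec_def L2_set_def by (simp add: sum_nonneg)
  finally show ?thesis .
qed

lemma cinner_self_Re: "Re (cinner x x) = (norm x)^2"
  by (simp add: cinner_self)
lemma cinner_self_Im: "Im (cinner x x) = 0"
  by (simp add: cinner_self)
lemma cinner_self_eq_0[simp]: "cinner x x = 0 \<longleftrightarrow> x = 0"
  by (simp add: cinner_self)

lemma norm_cinner_le: "cmod (cinner x y) \<le> norm x * norm y"
proof -
  have "cmod (cinner x y) \<le> (\<Sum>i\<in>UNIV. cmod (x$i) * cmod (y$i))"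
    unfolding cinner_def by (rule order_trans[OF norm_sum]) (simp add: norm_mult)
  also have "\<dots> \<le> L2_set (\<lambda>i. cmod (x$i)) UNIV * L2_set (\<lambda>i. cmod (y$i)) UNIV"
    using L2_set_mult_ineq[of "\<lambda>i. cmod (x$i)" "\<lambda>i. cmod (y$i)" UNIV] by simp
  finally show ?thesis by (simp add: norm_vec_def)
qed

definition herm :: "complex^'n^'n \<Rightarrow> bool" where
  "herm A \<longleftrightarrow> (\<forall>x y. cinner x (A *v y) = cinner (A *v x) y)"

lemma matrix_vector_mult_scale: "A *v (c *s x) = c *s (A *v (x::complex^'n))"
  by (simp add: vec_eq_iff matrix_vector_mult_def sum_distrib_left algebra_simps)

lemma pos_op_herm:
  fixes A :: "complex^'n^'n"
  assumes "pos_op A" shows "herm A"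
  unfolding herm_def
proof (intro allI)
  fix x y :: "complex^'n"
  define f where "f = (\<lambda>x y. cinner x (A *v y))"
  have real: "Im (f z z) = 0" for z using assms unfolding pos_op_def f_def by blast
  have exp: "f (x + c *s y) (x + c *s y) = f x x + c * f x y + cnj c * f y x + cnj c * c * f y y" for c
    unfolding f_def by (simp add: matrix_vector_right_distrib matrix_vector_mult_scale cinner_simps algebra_simps)
  have 1: "Im (f x y + f y x) = 0"
    using real[of "x + 1 *s y"] exp[of 1] real[of x] real[of y] by simp
  have 2: "Re (f x y - f y x) = 0"
    using real[of "x + \<i> *s y"] exp[of "\<i>"] real[of x] real[of y] by simp
  have "f y x = cnj (f x y)"
    using 1 2 by (simp add: complex_eq_iff)
  then show "cinner x (A *v y) = cinner (A *v x) y"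
    unfolding f_def by (metis cinner_commute complex_cnj_cnj)
qed

lemma herm_real: "herm A \<Longrightarrow> Im (cinner x (A *v x)) = 0"
proof -
  assume "herm A"
  then have "cinner x (A *v x) = cnj (cinner x (A *v x))"
    unfolding herm_def by (metis cinner_commute)
  then show ?thesis by (metis cnj.sel(2) neg_equal_zero)
qed

lemma ketbra_apply: "ketbra x y *v z = cinner y z *s x"
  by (simp add: vec_eq_iff ketbra_def matrix_vector_mult_def cinner_def sum_distrib_left algebra_simps)

lemma mat1_apply: "mat 1 *v x = x" by simp


lemma vec_subspace_real: "vec.subspace V \<Longrightarrow> subspace (V::(complex^'n) set)"
  unfolding vec.subspace_def real_vector.subspace_def by (simp add: scaleR_vec_as_s)

lemma vec_subspace_closed: "vec.subspace V \<Longrightarrow> closed (V::(complex^'n) set)"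
  by (rule closed_subspace) (rule vec_subspace_real)

lemma cont_form: "continuous_on S (\<lambda>x::complex^'n. Re (cinner x (A *v x)))"
  unfolding cinner_def matrix_vector_mult_def by (intro continuous_intros)

lemma scal_zero:
  fixes g :: complex and K :: real
  assumes "\<And>c. 2 * Re (c * g) + (cmod c)^2 * K \<le> 0"
  shows "g = 0"
proof -
  define t where "t = 1 / (\<bar>K\<bar> + 1)"
  have t: "t > 0" "t * \<bar>K\<bar> < 1" unfolding t_def by (auto simp: field_simps)
  have "2 * Re (complex_of_real t * cnj g * g) + (cmod (complex_of_real t * cnj g))^2 * K \<le> 0"
    using assms by blast
  moreover have "complex_of_real t * cnj g * g = complex_of_real (t * (cmod g)^2)"
  proof -
    have "cnj g * g = complex_of_real ((cmod g)^2)" by (metis complex_norm_square mult.commute)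
    then show ?thesis by (metis mult.assoc of_real_mult)
  qed
  moreover have "(cmod (complex_of_real t * cnj g))^2 = t^2 * (cmod g)^2"
    by (simp add: norm_mult power_mult_distrib abs_of_pos[OF t(1)])
  ultimately have "2 * t * (cmod g)^2 + t^2 * (cmod g)^2 * K \<le> 0" by simp
  then have "t * (cmod g)^2 * (2 + t * K) \<le> 0" by (simp add: algebra_simps power2_eq_square)
  moreover have "2 + t * K > 0" using t by (smt (verit) abs_le_iff mult_left_mono mult_minus_right)
  ultimately have "(cmod g)^2 \<le> 0"
    using t(1) by (smt (verit) mult_pos_pos zero_less_power2 mult_nonneg_nonneg zero_le_power2)
  then show ?thesis by simp
qed

lemma scal_cs:
  fixes B :: complex and P C :: real
  assumes "\<And>c. 0 \<le> P + 2 * Re (c * B) + (cmod c)^2 * C" and "C \<ge> 0"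
  shows "(cmod B)^2 \<le> P * C"
proof (cases "C = 0")
  case True
  have "B = 0"
  proof (rule scal_zero[where K = 0])
    fix c :: complex
    have P0: "0 \<le> P" using assms(1)[of 0] by simp
    have h: "\<And>s::real. 0 \<le> P + 2 * s * Re (c * B)"
    proof -
      fix s :: real
      have "0 \<le> P + 2 * Re ((of_real s * c) * B) + (cmod (of_real s * c))^2 * C" by (rule assms(1))
      then show "0 \<le> P + 2 * s * Re (c * B)" using True by (simp add: mult.assoc)
    qed
    show "2 * Re (c * B) + (cmod c)^2 * 0 \<le> 0"
    proof (rule ccontr)
      assume "\<not> ?thesis"
      then have pos: "Re (c * B) > 0" by simp
      have "0 \<le> P + 2 * (- (P + 1) / Re (c * B)) * Re (c * B)" by (rule h)
      also have "\<dots> = - P - 2" using pos by (simp add: field_simps)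
      finally show False using P0 by simp
    qed
  qed
  then show ?thesis using True by simp
next
  case False
  then have C: "C > 0" using assms(2) by simp
  have h: "0 \<le> P + 2 * Re ((- cnj B / of_real C) * B) + (cmod (- cnj B / of_real C))^2 * C"
    by (rule assms(1))
  have e1: "Re ((- cnj B / of_real C) * B) = -((cmod B)^2) / C"
  proof -
    have "cnj B * B = complex_of_real ((cmod B)^2)" by (metis complex_norm_square mult.commute)
    then have "(- cnj B / of_real C) * B = complex_of_real (-((cmod B)^2) / C)"
      by (simp add: field_simps)
    then show ?thesis by (metis Re_complex_of_real)
  qed
  have e2: "(cmod (- cnj B / of_real C))^2 * C = (cmod B)^2 / C"
    using C by (simp add: norm_divide power2_eq_square)
  have "0 \<le> P - (cmod B)^2 / C" using h unfolding e1 e2 by simp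
  then show ?thesis using C by (simp add: field_simps)
qed


definition onb :: "(complex^'n) set \<Rightarrow> (complex^'n) set \<Rightarrow> bool" where
  "onb B V \<longleftrightarrow> finite B \<and> B \<subseteq> V \<and> (\<forall>u\<in>B. norm u = 1)
     \<and> (\<forall>u\<in>B. \<forall>v\<in>B. u \<noteq> v \<longrightarrow> cinner u v = 0)
     \<and> (\<forall>x\<in>V. x = (\<Sum>u\<in>B. cinner u x *s u))"

lemma cinner_unit: "norm u = 1 \<Longrightarrow> cinner u u = 1"
  by (simp add: cinner_self)

lemma quad_expand:
  assumes "herm A"
  shows "cinner (x + c *s w) (A *v (x + c *s w)) = cinner x (A *v x) + c * cinner x (A *v w)
     + cnj c * cnj (cinner x (A *v w)) + cnj c * c * cinner w (A *v w)"
proof -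
  have "cinner w (A *v x) = cnj (cinner x (A *v w))"
    using assms unfolding herm_def by (metis cinner_commute)
  then show ?thesis
    by (simp add: matrix_vector_right_distrib matrix_vector_mult_scale cinner_simps algebra_simps)
qed

lemma norm_expand:
  "(norm (x + c *s w))^2 = Re (cinner x x + c * cinner x w + cnj c * cnj (cinner x w) + cnj c * c * cinner w w)"
proof -
  have "(norm (x + c *s w))^2 = Re (cinner (x + c *s w) (x + c *s w))" by (simp add: cinner_self)
  also have "cinner (x + c *s w) (x + c *s w) = cinner x x + c * cinner x w + cnj c * cnj (cinner x w) + cnj c * c * cinner w w"
    by (simp add: cinner_simps algebra_simps) (metis cinner_commute)
  finally show ?thesis .
qed

lemma matrix_vector_mult_scaleR_c: "A *v (r *\<^sub>R x) = r *\<^sub>R (A *v (x::complex^'n))"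
  by (simp add: scaleR_vec_as_s matrix_vector_mult_scale)

lemma cnj_mult_self: "cnj c * c = complex_of_real ((cmod c)^2)"
  by (metis complex_norm_square mult.commute)

lemma Re_cnj_c_c: "Re (cnj c * c * z) = (cmod c)^2 * Re z"
  by (simp add: cnj_mult_self)

lemma rayleigh_eig:
  fixes A :: "complex^'n^'n"
  assumes herm: "herm A" and sub: "vec.subspace V" and inv: "\<forall>x\<in>V. A *v x \<in> V"
    and x0: "x0 \<in> V" "norm x0 = 1"
    and max: "\<forall>y\<in>V. Re (cinner y (A *v y)) \<le> Re (cinner x0 (A *v x0)) * (norm y)^2"
  shows "A *v x0 = cinner x0 (A *v x0) *s x0"
proof -
  define \<mu> where "\<mu> = Re (cinner x0 (A *v x0))"
  have x0x0: "cinner x0 x0 = 1" using x0 by (simp add: cinner_unit)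
  have orth: "cinner x0 (A *v w) = 0" if w: "w \<in> V" "cinner x0 w = 0" for w
  proof (rule scal_zero[where K = "Re (cinner w (A *v w)) - \<mu> * (norm w)^2"])
    fix c :: complex
    define g where "g = cinner x0 (A *v w)"
    have "x0 + c *s w \<in> V" using sub x0 w by (simp add: vec.subspace_add vec.subspace_scale)
    then have le: "Re (cinner (x0 + c *s w) (A *v (x0 + c *s w))) \<le> \<mu> * (norm (x0 + c *s w))^2"
      using max unfolding \<mu>_def by blast
    have e1: "Re (cinner (x0 + c *s w) (A *v (x0 + c *s w))) = \<mu> + 2 * Re (c * g) + (cmod c)^2 * Re (cinner w (A *v w))"
    proof -
      have a: "Re (cnj c * cnj g) = Re (c * g)" by (metis complex_cnj_mult cnj.sel(1))
      have b: "Re (cnj c * c * cinner w (A *v w)) = (cmod c)^2 * Re (cinner w (A *v w))" by (rule Re_cnj_c_c)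
      show ?thesis unfolding quad_expand[OF herm] g_def[symmetric] \<mu>_def plus_complex.sel a b by simp
    qed
    have e2: "(norm (x0 + c *s w))^2 = 1 + (cmod c)^2 * (norm w)^2"
    proof -
      have "Re (cnj c * c * cinner w w) = (cmod c)^2 * (norm w)^2" by (simp only: Re_cnj_c_c cinner_self_Re)
      then show ?thesis unfolding norm_expand using w(2) x0x0 by simp
    qed
    show "2 * Re (c * g) + (cmod c)^2 * (Re (cinner w (A *v w)) - \<mu> * (norm w)^2) \<le> 0"
      using le unfolding e1 e2 by (simp add: algebra_simps)
  qed
  define w0 where "w0 = A *v x0 - cinner x0 (A *v x0) *s x0"
  have w0V: "w0 \<in> V" unfolding w0_def using sub x0 inv by (simp add: vec.subspace_diff vec.subspace_scale)
  have "cinner x0 w0 = 0" unfolding w0_def by (simp add: cinner_simps x0x0)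
  then have "cinner x0 (A *v w0) = 0" using orth w0V by blast
  then have "cinner (A *v x0) w0 = 0" using herm unfolding herm_def by metis
  moreover have "cinner w0 w0 = cinner (A *v x0 - cinner x0 (A *v x0) *s x0) w0"
    by (simp only: w0_def[symmetric])
  ultimately have "cinner w0 w0 = 0" using \<open>cinner x0 w0 = 0\<close>
    by (simp add: cinner_simps)
  then show ?thesis unfolding w0_def by simp
qed

lemma spectral:
  fixes A :: "complex^'n^'n"
  assumes "herm A"
  shows "vec.subspace V \<Longrightarrow> (\<forall>x\<in>V. A *v x \<in> V) \<Longrightarrow>
    \<exists>B. onb B V \<and> (\<forall>u\<in>B. A *v u = cinner u (A *v u) *s u)"
proof (induction "vec.dim V" arbitrary: V rule: less_induct)
  case less
  show ?case
  proof (cases "\<forall>x\<in>V. x = 0")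
    case True
    then show ?thesis by (intro exI[of _ "{}"]) (auto simp: onb_def)
  next
    case False
    then obtain v where v: "v \<in> V" "v \<noteq> 0" by blast
    define S where "S = V \<inter> sphere 0 1"
    have "(1 / norm v) *\<^sub>R v \<in> V"
      using v less.prems(1) by (simp add: scaleR_vec_as_s vec.subspace_scale)
    then have "(1 / norm v) *\<^sub>R v \<in> S"
      unfolding S_def using v by simp
    then have Sne: "S \<noteq> {}" by blast
    have Scomp: "compact S" unfolding S_def
      by (intro closed_Int_compact vec_subspace_closed less.prems compact_sphere)
    obtain x0 where x0S: "x0 \<in> S" and xmax: "\<forall>y\<in>S. Re (cinner y (A *v y)) \<le> Re (cinner x0 (A *v x0))"
      using continuous_attains_sup[OF Scomp Sne cont_form] by blast
    have x0: "x0 \<in> V" "norm x0 = 1" using x0S unfolding S_def by auto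
    have max: "\<forall>y\<in>V. Re (cinner y (A *v y)) \<le> Re (cinner x0 (A *v x0)) * (norm y)^2"
    proof
      fix y assume y: "y \<in> V"
      show "Re (cinner y (A *v y)) \<le> Re (cinner x0 (A *v x0)) * (norm y)^2"
      proof (cases "y = 0")
        case True then show ?thesis by simp
      next
        case False
        define r where "r = 1 / norm y"
        have "r *\<^sub>R y \<in> V" using y less.prems(1)
          by (simp add: scaleR_vec_as_s vec.subspace_scale)
        then have "r *\<^sub>R y \<in> S" unfolding S_def r_def using False by simp
        then have "Re (cinner (r *\<^sub>R y) (A *v (r *\<^sub>R y))) \<le> Re (cinner x0 (A *v x0))"
          using xmax by blast
        moreover have "Re (cinner (r *\<^sub>R y) (A *v (r *\<^sub>R y))) = r^2 * Re (cinner y (A *v y))"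
          by (simp add: matrix_vector_mult_scaleR_c cinner_scaleR_left cinner_scaleR_right power2_eq_square)
        ultimately have "r^2 * Re (cinner y (A *v y)) \<le> Re (cinner x0 (A *v x0))" by simp
        then show ?thesis using False unfolding r_def by (simp add: field_simps)
      qed
    qed
    have eig0: "A *v x0 = cinner x0 (A *v x0) *s x0"
      by (rule rayleigh_eig[OF assms less.prems x0 max])
    define V' where "V' = {x\<in>V. cinner x0 x = 0}"
    have subV': "vec.subspace V'"
      using less.prems(1) unfolding V'_def vec.subspace_def by (auto simp: cinner_simps)
    have invV': "\<forall>x\<in>V'. A *v x \<in> V'"
    proof
      fix x assume x: "x \<in> V'"
      have "cinner x0 (A *v x) = cinner (A *v x0) x" using assms unfolding herm_def by blast
      also have "\<dots> = 0" using x unfolding V'_def by (subst eig0) (simp add: cinner_simps)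
      finally show "A *v x \<in> V'" using x less.prems(2) unfolding V'_def by auto
    qed
    have "x0 \<notin> V'" using x0 unfolding V'_def by (simp add: cinner_unit)
    moreover have "V' \<subseteq> V" unfolding V'_def by auto
    ultimately have "V' \<subset> V" using x0(1) by blast
    then have dimlt: "vec.dim V' < vec.dim V"
      using vec.dim_psubset[of V' V] subV' less.prems(1) by (metis vec.span_eq_iff)
    obtain B' where B': "onb B' V'" "\<forall>u\<in>B'. A *v u = cinner u (A *v u) *s u"
      using less.hyps[OF dimlt subV' invV'] by blast
    have x0B': "x0 \<notin> B'" using B'(1) x0 unfolding onb_def V'_def by (auto simp: cinner_unit)
    have "onb (insert x0 B') V"
      unfolding onb_def
    proof (intro conjI ballI impI)
      show "finite (insert x0 B')" using B'(1) unfolding onb_def by simp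
      show "insert x0 B' \<subseteq> V" using B'(1) x0 unfolding onb_def V'_def by auto
      show "norm u = 1" if "u \<in> insert x0 B'" for u using that B'(1) x0 unfolding onb_def by auto
      show "cinner u v = 0" if uv: "u \<in> insert x0 B'" "v \<in> insert x0 B'" "u \<noteq> v" for u v
      proof -
        have B'V': "B' \<subseteq> V'" using B'(1) unfolding onb_def by simp
        consider "u = x0" "v \<in> B'" | "v = x0" "u \<in> B'" | "u \<in> B'" "v \<in> B'" using uv by auto
        then show ?thesis
        proof cases
          case 1 then show ?thesis using B'V' unfolding V'_def by auto
        next
          case 2 then have "cinner x0 u = 0" using B'V' unfolding V'_def by auto
          then show ?thesis using 2 by (metis cinner_commute complex_cnj_zero)
        next
          case 3 then show ?thesis using B'(1) uv(3) unfolding onb_def by blast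
        qed
      qed
      show "x = (\<Sum>u\<in>insert x0 B'. cinner u x *s u)" if x: "x \<in> V" for x
      proof -
        define x' where "x' = x - cinner x0 x *s x0"
        have "x' \<in> V'" unfolding V'_def x'_def using x x0 less.prems(1)
          by (simp add: vec.subspace_diff vec.subspace_scale cinner_simps cinner_unit)
        then have "x' = (\<Sum>u\<in>B'. cinner u x' *s u)" using B'(1) unfolding onb_def by blast
        also have "\<dots> = (\<Sum>u\<in>B'. cinner u x *s u)"
        proof (rule sum.cong[OF refl])
          fix u assume u: "u \<in> B'"
          then have "cinner x0 u = 0" using B'(1) unfolding onb_def V'_def by auto
          then have "cinner u x0 = 0" by (metis cinner_commute complex_cnj_zero)
          then show "cinner u x' *s u = cinner u x *s u" unfolding x'_def by (simp add: cinner_simps)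
        qed
        finally have "x = cinner x0 x *s x0 + (\<Sum>u\<in>B'. cinner u x *s u)" unfolding x'_def
          by (simp add: algebra_simps)
        then show ?thesis using B'(1) x0B' unfolding onb_def by (simp add: sum.insert)
      qed
    qed
    moreover have "\<forall>u\<in>insert x0 B'. A *v u = cinner u (A *v u) *s u" using B'(2) eig0 by auto
    ultimately show ?thesis by blast
  qed
qed


lemma matrix_vector_mult_sum_left: "(\<Sum>u\<in>B. M u) *v (x::complex^'n) = (\<Sum>u\<in>B. M u *v x)"
  by (induction B rule: infinite_finite_induct) (auto simp: matrix_vector_mult_add_rdistrib)

lemma matrix_vector_mult_sum_right: "A *v (\<Sum>u\<in>B. f u) = (\<Sum>u\<in>B. A *v (f u :: complex^'n))"
  by (induction B rule: infinite_finite_induct) (auto simp: matrix_vector_right_distrib)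

lemma onb_inner: "onb B V \<Longrightarrow> u \<in> B \<Longrightarrow> v \<in> B \<Longrightarrow> cinner v u = (if v = u then 1 else 0)"
  unfolding onb_def by (auto simp: cinner_unit)

lemma onb_coeff:
  assumes "onb B V" "v \<in> B"
  shows "cinner v (\<Sum>u\<in>B. c u *s u) = c v"
proof -
  have "cinner v (\<Sum>u\<in>B. c u *s u) = (\<Sum>u\<in>B. c u * (if v = u then 1 else 0))"
    unfolding cinner_sum_right cinner_scale_right using onb_inner[OF assms(1) _ assms(2)]
    by (intro sum.cong) auto
  also have "\<dots> = (\<Sum>u\<in>B. if v = u then c v else 0)" by (intro sum.cong) auto
  also have "\<dots> = c v" using assms unfolding onb_def by (simp add: sum.delta)
  finally show ?thesis .
qed

lemma herm_eigval_real:
  assumes "herm A" shows "cinner u (A *v u) = complex_of_real (Re (cinner u (A *v u)))"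
  using herm_real[OF assms, of u] by (simp add: complex_eq_iff)

lemma pos_cs:
  fixes S :: "complex^'n^'n"
  assumes "pos_op S"
  shows "(cmod (cinner x (S *v y)))^2 \<le> Re (cinner x (S *v x)) * Re (cinner y (S *v y))"
proof (rule scal_cs)
  have herm: "herm S" by (rule pos_op_herm[OF assms])
  fix c :: complex
  have "0 \<le> Re (cinner (x + c *s y) (S *v (x + c *s y)))" using assms unfolding pos_op_def by blast
  also have "Re (cinner (x + c *s y) (S *v (x + c *s y))) =
     Re (cinner x (S *v x)) + 2 * Re (c * cinner x (S *v y)) + (cmod c)^2 * Re (cinner y (S *v y))"
  proof -
    have a: "Re (cnj c * cnj (cinner x (S *v y))) = Re (c * cinner x (S *v y))"
      by (metis complex_cnj_mult cnj.sel(1))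
    show ?thesis unfolding quad_expand[OF herm] plus_complex.sel a Re_cnj_c_c by simp
  qed
  finally show "0 \<le> Re (cinner x (S *v x)) + 2 * Re (c * cinner x (S *v y)) + (cmod c)^2 * Re (cinner y (S *v y))" .
  show "0 \<le> Re (cinner y (S *v y))" using assms unfolding pos_op_def by blast
qed

lemma pos_zero:
  fixes S :: "complex^'n^'n"
  assumes "pos_op S" "Re (cinner u (S *v u)) = 0"
  shows "S *v u = 0"
proof -
  have "(cmod (cinner (S *v u) (S *v u)))^2 \<le> 0"
    using pos_cs[OF assms(1), of "S *v u" u] assms(2) by simp
  then show ?thesis by simp
qed

definition fop :: "(complex^'n) set \<Rightarrow> (complex^'n \<Rightarrow> complex) \<Rightarrow> complex^'n^'n" where
  "fop B \<phi> = (\<Sum>u\<in>B. ketbra (\<phi> u *s u) u)"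

lemma fop_apply: "fop B \<phi> *v x = (\<Sum>u\<in>B. (cinner u x * \<phi> u) *s u)"
  unfolding fop_def matrix_vector_mult_sum_left ketbra_apply by (simp add: vector_smult_assoc)

lemma onb_expand_apply:
  assumes "onb B UNIV" "\<forall>u\<in>B. A *v u = \<phi> u *s u"
  shows "A *v x = (\<Sum>u\<in>B. (cinner u x * \<phi> u) *s u)"
proof -
  have "x = (\<Sum>u\<in>B. cinner u x *s u)" using assms(1) unfolding onb_def by blast
  then have "A *v x = (\<Sum>u\<in>B. cinner u x *s (A *v u))"
    by (metis (no_types, lifting) matrix_vector_mult_scale matrix_vector_mult_sum_right sum.cong)
  also have "\<dots> = (\<Sum>u\<in>B. (cinner u x * \<phi> u) *s u)"
    using assms(2) by (intro sum.cong refl) (simp add: vector_smult_assoc)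
  finally show ?thesis .
qed

lemma sqrt_exists:
  fixes A :: "complex^'n^'n"
  assumes pos: "pos_op A"
  shows "\<exists>S. pos_op S \<and> S ** S = A \<and>
     (\<forall>V. vec.subspace V \<and> (\<forall>x\<in>V. A *v x \<in> V) \<longrightarrow> (\<forall>x\<in>V. S *v x \<in> V))"
proof -
  have herm: "herm A" by (rule pos_op_herm[OF pos])
  obtain B where B: "onb B UNIV" "\<forall>u\<in>B. A *v u = cinner u (A *v u) *s u"
    using spectral[OF herm, of UNIV] vec.subspace_UNIV by blast
  define \<mu> where "\<mu> u = Re (cinner u (A *v u))" for u
  have Au: "A *v u = of_real (\<mu> u) *s u" if "u \<in> B" for u
    using B(2) that herm_eigval_real[OF herm, of u] unfolding \<mu>_def by metis
  have \<mu>pos: "\<mu> u \<ge> 0" for u using pos unfolding pos_op_def \<mu>_def by blast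
  define S where "S = fop B (\<lambda>u. of_real (sqrt (\<mu> u)))"
  have Sx: "S *v x = (\<Sum>u\<in>B. (cinner u x * of_real (sqrt (\<mu> u))) *s u)" for x
    unfolding S_def fop_apply ..
  have Ax: "A *v x = (\<Sum>u\<in>B. (cinner u x * of_real (\<mu> u)) *s u)" for x
    by (rule onb_expand_apply[OF B(1)]) (use Au in blast)
  have "pos_op S"
    unfolding pos_op_def
  proof
    fix x
    have "cinner x (S *v x) = (\<Sum>u\<in>B. cinner u x * of_real (sqrt (\<mu> u)) * cinner x u)"
      unfolding Sx cinner_sum_right cinner_scale_right ..
    also have "\<dots> = (\<Sum>u\<in>B. complex_of_real (sqrt (\<mu> u) * (cmod (cinner u x))^2))"
    proof (intro sum.cong refl)
      fix u
      have "cinner x u * cinner u x = of_real ((cmod (cinner u x))^2)"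
        by (metis cinner_commute cnj_mult_self)
      then show "cinner u x * of_real (sqrt (\<mu> u)) * cinner x u = complex_of_real (sqrt (\<mu> u) * (cmod (cinner u x))^2)"
        by (simp add: algebra_simps)
    qed
    also have "\<dots> = complex_of_real (\<Sum>u\<in>B. sqrt (\<mu> u) * (cmod (cinner u x))^2)" by simp
    finally have eq: "cinner x (S *v x) = complex_of_real (\<Sum>u\<in>B. sqrt (\<mu> u) * (cmod (cinner u x))^2)" .
    have "(\<Sum>u\<in>B. sqrt (\<mu> u) * (cmod (cinner u x))^2) \<ge> 0"
      using \<mu>pos by (intro sum_nonneg) simp
    then show "Im (cinner x (S *v x)) = 0 \<and> 0 \<le> Re (cinner x (S *v x))" unfolding eq by simp
  qed
  moreover have "S ** S = A"
    unfolding matrix_eq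
  proof
    fix x
    have "(S ** S) *v x = S *v (S *v x)" by (simp add: matrix_vector_mul_assoc)
    also have "\<dots> = (\<Sum>u\<in>B. (cinner u (S *v x) * of_real (sqrt (\<mu> u))) *s u)" by (rule Sx)
    also have "\<dots> = (\<Sum>u\<in>B. (cinner u x * of_real (\<mu> u)) *s u)"
    proof (intro sum.cong refl)
      fix u assume u: "u \<in> B"
      have "cinner u (S *v x) = cinner u x * of_real (sqrt (\<mu> u))"
        unfolding Sx by (rule onb_coeff[OF B(1) u])
      moreover have "sqrt (\<mu> u) * sqrt (\<mu> u) = \<mu> u" using \<mu>pos[of u] by simp
      ultimately show "(cinner u (S *v x) * of_real (sqrt (\<mu> u))) *s u = (cinner u x * of_real (\<mu> u)) *s u"
        by (metis mult.assoc of_real_mult)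
    qed
    also have "\<dots> = A *v x" by (rule Ax[symmetric])
    finally show "(S ** S) *v x = A *v x" .
  qed
  moreover have "\<forall>x\<in>V. S *v x \<in> V" if V: "vec.subspace V" "\<forall>x\<in>V. A *v x \<in> V" for V
  proof
    obtain C where C: "onb C V" "\<forall>w\<in>C. A *v w = cinner w (A *v w) *s w"
      using spectral[OF herm V] by blast
    have Sw: "S *v w = of_real (sqrt (Re (cinner w (A *v w)))) *s w" if w: "w \<in> C" for w
    proof -
      define \<nu> where "\<nu> = Re (cinner w (A *v w))"
      have Aw: "A *v w = of_real \<nu> *s w" using C(2) w herm_eigval_real[OF herm, of w] unfolding \<nu>_def by metis
      have "w = (\<Sum>u\<in>B. cinner u w *s u)" using B(1) unfolding onb_def by blast
      have "S *v w = (\<Sum>u\<in>B. (cinner u w * of_real (sqrt \<nu>)) *s u)"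
        unfolding Sx
      proof (intro sum.cong refl)
        fix u assume u: "u \<in> B"
        have "of_real (\<mu> u) * cinner u w = cinner (A *v u) w" using Au[OF u] by (simp add: cinner_scale_left)
        also have "\<dots> = cinner u (A *v w)" using herm unfolding herm_def by metis
        also have "\<dots> = of_real \<nu> * cinner u w" unfolding Aw by (simp add: cinner_scale_right)
        finally have "cinner u w = 0 \<or> \<mu> u = \<nu>" by simp
        then show "(cinner u w * of_real (sqrt (\<mu> u))) *s u = (cinner u w * of_real (sqrt \<nu>)) *s u" by auto
      qed
      also have "\<dots> = of_real (sqrt \<nu>) *s (\<Sum>u\<in>B. cinner u w *s u)"
        by (simp add: vec.scale_sum_right vector_smult_assoc mult.commute)
      also have "\<dots> = of_real (sqrt \<nu>) *s w" using \<open>w = _\<close> by simp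
      finally show ?thesis unfolding \<nu>_def .
    qed
    fix x assume x: "x \<in> V"
    have "x = (\<Sum>w\<in>C. cinner w x *s w)" using C(1) x unfolding onb_def by blast
    then have "S *v x = (\<Sum>w\<in>C. cinner w x *s (S *v w))"
      by (metis (no_types, lifting) matrix_vector_mult_scale matrix_vector_mult_sum_right sum.cong)
    also have "\<dots> \<in> V"
      using C(1) V(1) unfolding onb_def
      by (intro vec.subspace_sum) (auto simp: Sw vec.subspace_scale)
    finally show "S *v x \<in> V" .
  qed
  ultimately show ?thesis by blast
qed

lemma herm_diff: "herm A \<Longrightarrow> herm B \<Longrightarrow> herm (A - B)"
  unfolding herm_def by (simp add: matrix_vector_mult_diff_rdistrib cinner_simps)

lemma sqrt_unique:
  fixes S1 S2 :: "complex^'n^'n"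
  assumes p1: "pos_op S1" and p2: "pos_op S2" and eq: "S1 ** S1 = S2 ** S2"
  shows "S1 = S2"
proof -
  define D where "D = S1 - S2"
  have h1: "herm S1" and h2: "herm S2" using p1 p2 by (simp_all add: pos_op_herm)
  have hD: "herm D" unfolding D_def by (rule herm_diff[OF h1 h2])
  obtain B where B: "onb B UNIV" "\<forall>u\<in>B. D *v u = cinner u (D *v u) *s u"
    using spectral[OF hD, of UNIV] vec.subspace_UNIV by blast
  have Du0: "D *v u = 0" if u: "u \<in> B" for u
  proof -
    define \<mu> where "\<mu> = Re (cinner u (D *v u))"
    have Du: "D *v u = of_real \<mu> *s u" using B(2) u herm_eigval_real[OF hD, of u] unfolding \<mu>_def by metis
    have "S1 *v (D *v u) + D *v (S2 *v u) = (S1 ** S1) *v u - (S2 ** S2) *v u"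
      unfolding D_def by (simp add: matrix_vector_mult_diff_rdistrib matrix_vector_mult_diff_distrib
          matrix_vector_mul_assoc[symmetric])
    also have "\<dots> = 0" using eq by simp
    finally have z: "S1 *v (D *v u) + D *v (S2 *v u) = 0" .
    have "cinner u (D *v (S2 *v u)) = cinner (D *v u) (S2 *v u)" using hD unfolding herm_def by blast
    also have "\<dots> = of_real \<mu> * cinner u (S2 *v u)" unfolding Du by (simp add: cinner_scale_left)
    finally have "0 = of_real \<mu> * cinner u (S1 *v u) + of_real \<mu> * cinner u (S2 *v u)"
      using arg_cong[OF z, of "cinner u"] unfolding Du
      by (simp add: cinner_add_right matrix_vector_mult_scale cinner_scale_right)
    then have "\<mu> = 0 \<or> cinner u (S1 *v u) + cinner u (S2 *v u) = 0"
      by (simp add: distrib_left[symmetric])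
    then show ?thesis
    proof
      assume "\<mu> = 0" then show ?thesis using Du by simp
    next
      assume s: "cinner u (S1 *v u) + cinner u (S2 *v u) = 0"
      have "Re (cinner u (S1 *v u)) \<ge> 0" "Re (cinner u (S2 *v u)) \<ge> 0"
        using p1 p2 unfolding pos_op_def by blast+
      moreover have "Re (cinner u (S1 *v u)) + Re (cinner u (S2 *v u)) = 0"
        using arg_cong[OF s, of Re] by simp
      ultimately have "Re (cinner u (S1 *v u)) = 0" "Re (cinner u (S2 *v u)) = 0" by linarith+
      then have "S1 *v u = 0" "S2 *v u = 0" using pos_zero p1 p2 by blast+
      then show ?thesis unfolding D_def by (simp add: matrix_vector_mult_diff_rdistrib)
    qed
  qed
  have "D *v x = 0" for x
  proof -
    have "D *v x = (\<Sum>u\<in>B. (cinner u x * 0) *s u)"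
      by (rule onb_expand_apply[OF B(1)]) (use Du0 in simp)
    then show ?thesis by simp
  qed
  then show ?thesis unfolding D_def matrix_eq by (simp add: matrix_vector_mult_diff_rdistrib)
qed

lemma psqrt:
  fixes A :: "complex^'n^'n"
  assumes "pos_op A"
  shows "pos_op (psqrt A)" "psqrt A ** psqrt A = A"
    "vec.subspace V \<Longrightarrow> (\<forall>x\<in>V. A *v x \<in> V) \<Longrightarrow> x \<in> V \<Longrightarrow> psqrt A *v x \<in> V"
proof -
  obtain S where S: "pos_op S" "S ** S = A"
    "\<forall>V. vec.subspace V \<and> (\<forall>x\<in>V. A *v x \<in> V) \<longrightarrow> (\<forall>x\<in>V. S *v x \<in> V)"
    using sqrt_exists[OF assms] by blast
  have "psqrt A = S" unfolding psqrt_def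
    by (rule the_equality) (use S sqrt_unique in auto)
  then show "pos_op (psqrt A)" "psqrt A ** psqrt A = A"
    "vec.subspace V \<Longrightarrow> (\<forall>x\<in>V. A *v x \<in> V) \<Longrightarrow> x \<in> V \<Longrightarrow> psqrt A *v x \<in> V"
    using S by auto
qed


lemma orth_subspace: "vec.subspace (orth M)"
  unfolding vec.subspace_def orth_def by (auto simp: cinner_simps)

lemma orth_span: "orth (vec.span U) = orth U"
proof
  show "orth (vec.span U) \<subseteq> orth U" unfolding orth_def using vec.span_superset by blast
  show "orth U \<subseteq> orth (vec.span U)"
  proof
    fix y assume y: "y \<in> orth U"
    have "vec.subspace {x. cinner x y = 0}"
      unfolding vec.subspace_def by (auto simp: cinner_simps)
    moreover have "U \<subseteq> {x. cinner x y = 0}" using y unfolding orth_def by auto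
    ultimately have "vec.span U \<subseteq> {x. cinner x y = 0}" by (rule vec.span_minimal[rotated])
    then show "y \<in> orth (vec.span U)" unfolding orth_def by auto
  qed
qed

lemma max_reducing_props:
  fixes T :: "complex^'n^'n"
  assumes S: "vec.subspace S"
  shows "reduces T (max_reducing T S)" "max_reducing T S \<subseteq> S"
    "\<And>M. reduces T M \<Longrightarrow> M \<subseteq> S \<Longrightarrow> M \<subseteq> max_reducing T S"
proof -
  define U where "U = \<Union>{M. reduces T M \<and> M \<subseteq> S}"
  define K where "K = vec.span U"
  have US: "U \<subseteq> S" unfolding U_def by auto
  have KS: "K \<subseteq> S" unfolding K_def using vec.span_minimal[OF US S] .
  have max: "M \<subseteq> K" if "reduces T M" "M \<subseteq> S" for M
    using that vec.span_superset[of U] unfolding K_def U_def by blast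
  have red: "reduces T K"
    unfolding reduces_def
  proof (intro conjI)
    show "vec.subspace K" unfolding K_def by simp
    have sub: "vec.subspace {x. T *v x \<in> vec.span U}"
      unfolding vec.subspace_def
      by (auto simp: matrix_vector_right_distrib matrix_vector_mult_scale vec.span_add vec.span_scale vec.span_zero)
    have "U \<subseteq> {x. T *v x \<in> vec.span U}"
    proof
      fix x assume "x \<in> U"
      then obtain M where M: "reduces T M" "M \<subseteq> S" "x \<in> M" unfolding U_def by blast
      then have "T *v x \<in> M" unfolding reduces_def by blast
      then show "x \<in> {x. T *v x \<in> vec.span U}" using M vec.span_superset[of U] unfolding U_def by blast
    qed
    then have "vec.span U \<subseteq> {x. T *v x \<in> vec.span U}" by (rule vec.span_minimal[OF _ sub])
    then show "(\<lambda>x. T *v x) ` K \<subseteq> K" unfolding K_def by auto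
    show "(\<lambda>x. T *v x) ` orth K \<subseteq> orth K"
    proof
      fix z assume "z \<in> (\<lambda>x. T *v x) ` orth K"
      then obtain y where y: "y \<in> orth K" "z = T *v y" by blast
      have "T *v y \<in> orth U"
        unfolding orth_def
      proof (intro CollectI ballI)
        fix x assume "x \<in> U"
        then obtain M where M: "reduces T M" "M \<subseteq> S" "x \<in> M" unfolding U_def by blast
        have "y \<in> orth M" using y(1) max[OF M(1,2)] unfolding orth_def by blast
        then have "T *v y \<in> orth M" using M(1) unfolding reduces_def by blast
        then show "cinner x (T *v y) = 0" using M(3) unfolding orth_def by blast
      qed
      then show "z \<in> orth K" unfolding K_def orth_span y(2) .
    qed
  qed
  have eq: "max_reducing T S = K"
    unfolding max_reducing_def
    by (rule the_equality) (use red KS max in blast)+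
  show "reduces T (max_reducing T S)" "max_reducing T S \<subseteq> S"
    "\<And>M. reduces T M \<Longrightarrow> M \<subseteq> S \<Longrightarrow> M \<subseteq> max_reducing T S"
    unfolding eq using red KS max by auto
qed


lemma scalar_main:
  fixes a d p m :: "nat \<Rightarrow> real" and b r :: "nat \<Rightarrow> complex" and \<tau> :: real
  assumes \<tau>: "0 < \<tau>" "\<tau> < 1"
  and a: "\<And>n. a n = (p n)^2 + (cmod (r n))^2"
  and d: "\<And>n. d n = (cmod (r n))^2 + (m n)^2"
  and b: "\<And>n. b n = r n * of_real (p n + m n)"
  and pm: "\<And>n. p n \<ge> 0" "\<And>n. m n \<ge> 0" "\<And>n. (cmod (r n))^2 \<le> p n * m n"
  and a': "\<And>n. a (Suc n) = a n - \<tau> * (p n)^2"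
  and b': "\<And>n. b (Suc n) = b n - of_real (\<tau> * p n) * r n"
  and d': "\<And>n. d (Suc n) = d n - \<tau> * (cmod (r n))^2"
  and D0: "a 0 * d 0 - (cmod (b 0))^2 > 0"
  and b0: "b 0 \<noteq> 0"
  shows "a \<longlonglongrightarrow> 0" "b \<longlonglongrightarrow> 0" "d \<longlonglongrightarrow> 0"
proof -
  define R where "R n = (cmod (r n))^2" for n
  define \<Delta> where "\<Delta> n = a n * d n - (cmod (b n))^2" for n
  have R0: "R n \<ge> 0" for n unfolding R_def by simp
  have bsq: "(cmod (b n))^2 = R n * (p n + m n)^2" for n
    unfolding b R_def by (simp add: norm_mult power_mult_distrib norm_of_real del: of_real_add of_real_diff)
  have b'r: "b (Suc n) = r n * of_real (p n + m n - \<tau> * p n)" for n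
    unfolding b'[of n] b[of n] by (simp add: algebra_simps)
  have b'sq: "(cmod (b (Suc n)))^2 = R n * (p n + m n - \<tau> * p n)^2" for n
    unfolding b'r R_def by (simp add: norm_mult power_mult_distrib norm_of_real del: of_real_add of_real_diff)
  have Dsq: "\<Delta> n = (p n * m n - R n)^2" for n
    unfolding \<Delta>_def bsq a d R_def[symmetric] by (simp add: power2_eq_square algebra_simps)
  have Dstep: "\<Delta> (Suc n) = (1 - \<tau>) * \<Delta> n" for n
    unfolding \<Delta>_def b'sq[of n] a'[of n] d'[of n] a[of n] d[of n] bsq[of n] R_def[symmetric] by (simp add: power2_eq_square algebra_simps)
  have Dn: "\<Delta> n = (1 - \<tau>)^n * \<Delta> 0" for n
    by (induction n) (simp_all add: Dstep)
  have Dpos: "\<Delta> n > 0" for n unfolding Dn[of n] using D0 \<tau> unfolding \<Delta>_def by simp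
  have a0: "a n \<ge> 0" and d0: "d n \<ge> 0" for n unfolding a d by simp_all
  have apos: "a n > 0" for n
  proof (rule ccontr)
    assume "\<not> a n > 0" then have "a n = 0" using a0[of n] by simp
    then show False using Dpos[of n] unfolding \<Delta>_def by simp
  qed
  have bad: "(cmod (b n))^2 \<le> a n * d n" for n using Dpos[of n] unfolding \<Delta>_def by simp
  have pa: "(p n)^2 \<le> a n" for n unfolding a by simp
  have ra: "R n \<le> a n" for n unfolding a R_def by simp
  \<comment> \<open>trace argument\<close>
  have tr: "a n + d n + \<tau> * (\<Sum>k<n. a k) = a 0 + d 0" for n
  proof (induction n)
    case (Suc n)
    have "a (Suc n) + d (Suc n) = a n + d n - \<tau> * a n"
      unfolding a' d' using a[of n] by (simp add: algebra_simps)
    then show ?case using Suc by (simp add: algebra_simps)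
  qed simp
  have "summable a"
  proof (rule summableI_nonneg_bounded)
    show "0 \<le> a n" for n by (rule a0)
    show "(\<Sum>k<n. a k) \<le> (a 0 + d 0) / \<tau>" for n
      using tr[of n] a0[of n] d0[of n] \<tau> by (simp add: field_simps)
  qed
  then show alim: "a \<longlonglongrightarrow> 0" by (rule summable_LIMSEQ_zero)
  have ddec: "decseq d" unfolding decseq_Suc_iff using d' \<tau> by simp
  have dle0: "d n \<le> d 0" for n using ddec unfolding decseq_def by simp
  have bsq_lim: "(\<lambda>n. (cmod (b n))^2) \<longlonglongrightarrow> 0"
  proof (rule tendsto_sandwich[of "\<lambda>n. 0" _ _ "\<lambda>n. a n * d 0"])
    show "\<forall>\<^sub>F n in sequentially. 0 \<le> (cmod (b n))^2" by simp
    show "\<forall>\<^sub>F n in sequentially. (cmod (b n))^2 \<le> a n * d 0"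
    proof (intro always_eventually allI)
      fix n
      have "a n * d n \<le> a n * d 0" using dle0[of n] a0[of n] by (rule mult_left_mono)
      then show "(cmod (b n))^2 \<le> a n * d 0" using bad[of n] by linarith
    qed
    show "(\<lambda>n. 0) \<longlonglongrightarrow> (0::real)" by simp
    show "(\<lambda>n. a n * d 0) \<longlonglongrightarrow> 0" using tendsto_mult[OF alim tendsto_const[of "d 0"]] by simp
  qed
  have "(\<lambda>n. sqrt ((cmod (b n))^2)) \<longlonglongrightarrow> sqrt 0" by (rule tendsto_real_sqrt[OF bsq_lim])
  then have "(\<lambda>n. cmod (b n)) \<longlonglongrightarrow> 0" by simp
  then show blim: "b \<longlonglongrightarrow> 0" by (simp add: tendsto_norm_zero_iff)
  obtain lam where dlim: "d \<longlonglongrightarrow> lam" and dge: "\<forall>i. lam \<le> d i"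
    using decseq_convergent[OF ddec, of 0] d0 by blast
  have lam0: "lam \<ge> 0" using LIMSEQ_le_const[OF dlim, of 0] d0 by blast
  have "lam = 0"
  proof (rule ccontr)
    assume "lam \<noteq> 0"
    then have lam: "lam > 0" using lam0 by simp
    define Q where "Q n \<alpha> = a n * (cmod \<alpha>)^2 + 2 * Re (cnj \<alpha> * b n) + d n" for n \<alpha>
    have Qstep: "Q (Suc n) \<alpha> \<le> Q n \<alpha>" for n \<alpha>
    proof -
      have "Q n \<alpha> - Q (Suc n) \<alpha> = \<tau> * (cmod (of_real (p n) * \<alpha> + r n))^2"
      proof -
        have "(cmod (of_real (p n) * \<alpha> + r n))^2 = (p n)^2 * (cmod \<alpha>)^2 + 2 * p n * Re (cnj \<alpha> * r n) + R n"
          unfolding R_def cmod_power2 by (simp add: power2_eq_square algebra_simps)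
        then show ?thesis unfolding Q_def a' b' d' R_def by (simp add: algebra_simps)
      qed
      moreover have "\<tau> * (cmod (of_real (p n) * \<alpha> + r n))^2 \<ge> 0" using \<tau> by simp
      ultimately show ?thesis by linarith
    qed
    have Qmono: "Q k \<alpha> \<le> Q n \<alpha>" if "n \<le> k" for n k \<alpha>
      using that
    proof (induction k)
      case (Suc k) then show ?case using Qstep[of k \<alpha>] by (cases "n = Suc k") auto
    qed simp
    have DA: "\<Delta> n \<ge> lam * a n" for n
    proof -
      define \<alpha> where "\<alpha> = - b n / of_real (a n)"
      have Qn: "Q n \<alpha> = \<Delta> n / a n"
      proof -
        have 1: "(cmod \<alpha>)^2 = (cmod (b n))^2 / (a n)^2" unfolding \<alpha>_def using apos[of n]
          by (simp add: norm_divide power_divide)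
        have 2: "Re (cnj \<alpha> * b n) = -((cmod (b n))^2) / a n"
        proof -
          have "cnj (b n) * b n = complex_of_real ((cmod (b n))^2)" by (metis complex_norm_square mult.commute)
          moreover have "cnj \<alpha> * b n = - (cnj (b n) * b n) / of_real (a n)" unfolding \<alpha>_def by simp
          ultimately have "cnj \<alpha> * b n = complex_of_real (-((cmod (b n))^2) / a n)" by simp
          then show ?thesis by (metis Re_complex_of_real)
        qed
        show ?thesis unfolding Q_def 1 2 \<Delta>_def using apos[of n] by (simp add: field_simps power2_eq_square)
      qed
      have "lam \<le> \<Delta> n / a n"
      proof (rule LIMSEQ_le_const2)
        show "(\<lambda>k. lam - 2 * cmod \<alpha> * cmod (b k)) \<longlonglongrightarrow> lam"
          using tendsto_diff[OF tendsto_const[of lam] tendsto_mult[OF tendsto_const[of "2 * cmod \<alpha>"] tendsto_norm[OF blim]]]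
          by simp
        show "\<exists>N. \<forall>k\<ge>N. lam - 2 * cmod \<alpha> * cmod (b k) \<le> \<Delta> n / a n"
        proof (intro exI allI impI)
          fix k assume "n \<le> k"
          have "lam - 2 * cmod \<alpha> * cmod (b k) \<le> Q k \<alpha>"
          proof -
            have "- (cmod \<alpha> * cmod (b k)) \<le> Re (cnj \<alpha> * b k)"
              using abs_Re_le_cmod[of "cnj \<alpha> * b k"] by (simp add: norm_mult)
            moreover have "0 \<le> a k * (cmod \<alpha>)^2" using a0[of k] by simp
            ultimately show ?thesis unfolding Q_def using dge[rule_format, of k] by linarith
          qed
          also have "\<dots> \<le> Q n \<alpha>" using Qmono[OF \<open>n \<le> k\<close>] .
          finally show "lam - 2 * cmod \<alpha> * cmod (b k) \<le> \<Delta> n / a n" unfolding Qn .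
        qed
      qed
      then show ?thesis using apos[of n] by (simp add: field_simps)
    qed
    define \<rho> where "\<rho> n = (cmod (b n))^2 / \<Delta> n" for n
    have rho_bd: "\<rho> n \<le> d 0 / lam" for n
    proof -
      have "(cmod (b n))^2 * lam \<le> a n * d n * lam" using bad[of n] lam by simp
      also have "\<dots> \<le> \<Delta> n * d n" using mult_right_mono[OF DA[of n] d0[of n]] by (simp add: algebra_simps)
      also have "\<dots> \<le> \<Delta> n * d 0" using dle0[of n] Dpos[of n] by simp
      finally show ?thesis unfolding \<rho>_def using Dpos[of n] lam by (simp add: field_simps)
    qed
    obtain N where N: "\<forall>n\<ge>N. a n \<le> lam / 16"
    proof -
      have "\<forall>\<^sub>F n in sequentially. a n < lam / 16" using order_tendstoD(2)[OF alim, of "lam / 16"] lam by simp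
      then show ?thesis using that unfolding eventually_sequentially by (meson less_imp_le)
    qed
    define \<kappa> where "\<kappa> = (1 - \<tau> / 2) / (1 - \<tau>)"
    have kap: "\<kappa> > 1" unfolding \<kappa>_def using \<tau> by (simp add: field_simps)
    have rho_step: "\<rho> (Suc n) \<ge> \<kappa> * \<rho> n" if "n \<ge> N" for n
    proof -
      have pm2: "(p n + m n)^2 \<ge> lam"
      proof -
        have "(p n + m n)^2 = (p n)^2 + 2 * (p n * m n) + (m n)^2" by (simp add: power2_eq_square algebra_simps)
        also have "\<dots> \<ge> a n + d n" unfolding a d using pm(3)[of n] by simp
        finally show ?thesis using dge a0[of n] by (smt (verit))
      qed
      have "(p n)^2 \<le> ((p n + m n) / 4)^2"
      proof -
        have "a n * 16 \<le> lam" using N that by simp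
        then show ?thesis using pa[of n] pm2 by (simp add: power_divide)
      qed
      then have p4: "p n \<le> (p n + m n) / 4"
        using pm(1,2)[of n] by (meson power2_le_imp_le add_nonneg_nonneg divide_nonneg_pos zero_less_numeral)
      have "\<tau> * p n \<le> \<tau> * ((p n + m n) / 4)" by (rule mult_left_mono[OF p4]) (use \<tau> in simp)
      then have "p n + m n - \<tau> * p n \<ge> (1 - \<tau> / 4) * (p n + m n)" by (simp add: algebra_simps)
      moreover have "(1 - \<tau> / 4) * (p n + m n) \<ge> 0" using \<tau> pm(1,2)[of n] by simp
      ultimately have X1: "(p n + m n - \<tau> * p n)^2 \<ge> ((1 - \<tau> / 4) * (p n + m n))^2"
        by (simp add: power_mono)
      have X2: "((1 - \<tau> / 4) * (p n + m n))^2 \<ge> (1 - \<tau> / 2) * (p n + m n)^2"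
      proof -
        have "(1 - \<tau> / 4)^2 \<ge> 1 - \<tau> / 2" by (simp add: power2_eq_square field_simps)
        then show ?thesis by (simp add: power_mult_distrib mult_right_mono)
      qed
      have "R n * ((1 - \<tau> / 2) * (p n + m n)^2) \<le> R n * (p n + m n - \<tau> * p n)^2"
        by (rule mult_left_mono[OF order_trans[OF X2 X1] R0])
      then have "(cmod (b (Suc n)))^2 \<ge> (1 - \<tau> / 2) * (cmod (b n))^2"
        unfolding b'sq[of n] bsq[of n] by (simp add: algebra_simps)
      then have "\<rho> (Suc n) \<ge> (1 - \<tau> / 2) * (cmod (b n))^2 / ((1 - \<tau>) * \<Delta> n)"
        unfolding \<rho>_def Dstep using Dpos[of n] \<tau> by (simp add: divide_right_mono)
      also have "(1 - \<tau> / 2) * (cmod (b n))^2 / ((1 - \<tau>) * \<Delta> n) = \<kappa> * \<rho> n"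
        unfolding \<kappa>_def \<rho>_def by simp
      finally show ?thesis .
    qed
    have bnz: "b n \<noteq> 0" for n
    proof (induction n)
      case 0 then show ?case by (rule b0)
    next
      case (Suc n)
      have r: "r n \<noteq> 0" using Suc b[of n] by auto
      have "p n + m n - \<tau> * p n \<noteq> 0"
      proof
        assume "p n + m n - \<tau> * p n = 0"
        then have e: "(1 - \<tau>) * p n + m n = 0" by (simp add: algebra_simps)
        have "(1 - \<tau>) * p n \<ge> 0" using pm(1)[of n] \<tau> by simp
        then have "(1 - \<tau>) * p n = 0" "m n = 0" using e pm(2)[of n] by linarith+
        then have "p n = 0" "m n = 0" using \<tau> by simp_all
        then have "a n = 0" using pm(3)[of n] unfolding a by simp
        then show False using apos[of n] by simp
      qed
      then have "complex_of_real (p n + m n - \<tau> * p n) \<noteq> 0" by (metis of_real_eq_0_iff)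
      then show ?case unfolding b'r using r by (metis mult_eq_0_iff)
    qed
    have rpos: "\<rho> N > 0" unfolding \<rho>_def using Dpos[of N] bnz[of N] by simp
    have rho_pow: "\<rho> (N + k) \<ge> \<kappa>^k * \<rho> N" for k
    proof (induction k)
      case (Suc k)
      have "\<kappa>^(Suc k) * \<rho> N = \<kappa> * (\<kappa>^k * \<rho> N)" by simp
      also have "\<dots> \<le> \<kappa> * \<rho> (N + k)" using Suc kap by simp
      also have "\<dots> \<le> \<rho> (N + Suc k)" using rho_step[of "N + k"] by simp
      finally show ?case .
    qed simp
    obtain k where "(d 0 / lam) / \<rho> N < \<kappa>^k" using real_arch_pow[OF kap] by blast
    then have "d 0 / lam < \<kappa>^k * \<rho> N" using pos_divide_less_eq[OF rpos, of "d 0 / lam" "\<kappa>^k"] by simp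
    also have "\<dots> \<le> \<rho> (N + k)" by (rule rho_pow)
    also have "\<dots> \<le> d 0 / lam" by (rule rho_bd)
    finally show False by simp
  qed
  then show "d \<longlonglongrightarrow> 0" using dlim by simp
qed


lemma orth_indep:
  fixes S :: "(complex^'n) set"
  assumes "finite S" "\<forall>v\<in>S. v \<noteq> 0" "\<forall>u\<in>S. \<forall>v\<in>S. u \<noteq> v \<longrightarrow> cinner u v = 0"
  shows "vec.independent S"
proof
  assume "vec.dependent S"
  then obtain u v0 where uv: "v0 \<in> S" "u v0 \<noteq> 0" "(\<Sum>v\<in>S. u v *s v) = 0"
    using vec.dependent_finite[OF assms(1)] by blast
  have "0 = cinner v0 (\<Sum>v\<in>S. u v *s v)" using uv(3) by simp
  also have "\<dots> = (\<Sum>v\<in>S. u v * cinner v0 v)" by (simp add: cinner_sum_right cinner_scale_right)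
  also have "\<dots> = u v0 * cinner v0 v0 + (\<Sum>v\<in>S - {v0}. u v * cinner v0 v)"
    using assms(1) uv(1) by (simp add: sum.remove)
  also have "(\<Sum>v\<in>S - {v0}. u v * cinner v0 v) = 0"
    using assms(3) uv(1) by (intro sum.neutral) auto
  finally have "u v0 * cinner v0 v0 = 0" by simp
  then show False using uv(2) assms(2) uv(1) by simp
qed

lemma two_dim_basis:
  fixes W :: "(complex^'n) set"
  assumes W: "vec.subspace W" "vec.dim W = 2" and e: "e \<in> W" "norm e = 1"
  shows "\<exists>f\<in>W. norm f = 1 \<and> cinner e f = 0 \<and> (\<forall>y\<in>W. y = cinner e y *s e + cinner f y *s f)"
proof -
  obtain B where B: "B \<subseteq> W" "vec.independent B" "W \<subseteq> vec.span B" "card B = vec.dim W"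
    using vec.basis_exists by blast
  have ee: "cinner e e = 1" using e by (simp add: cinner_unit)
  have "\<not> B \<subseteq> vec.span {e}"
  proof
    assume "B \<subseteq> vec.span {e}"
    then have "card B \<le> card {e}" using vec.independent_span_bound[of "{e}" B] B(2) by simp
    then show False using B(4) W(2) by simp
  qed
  then obtain g where g: "g \<in> B" "g \<notin> vec.span {e}" by blast
  define f0 where "f0 = g - cinner e g *s e"
  have f0W: "f0 \<in> W" unfolding f0_def using g B(1) e W(1) by (auto intro: vec.subspace_diff vec.subspace_scale)
  have f0nz: "f0 \<noteq> 0"
  proof
    assume "f0 = 0"
    then have "g = cinner e g *s e" unfolding f0_def by simp
    then have "g \<in> vec.span {e}" by (metis vec.span_base vec.span_scale singletonI)
    then show False using g by simp
  qed
  define f where "f = complex_of_real (1 / norm f0) *s f0"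
  have fW: "f \<in> W" unfolding f_def using f0W W(1) by (simp add: vec.subspace_scale)
  have fn: "norm f = 1"
  proof -
    have "f = (1 / norm f0) *\<^sub>R f0" unfolding f_def by (simp add: scaleR_vec_as_s)
    then show ?thesis using f0nz by simp
  qed
  have ef: "cinner e f = 0" unfolding f_def f0_def by (simp add: cinner_simps ee)
  have fe: "cinner f e = 0" using ef by (metis cinner_commute complex_cnj_zero)
  have ff: "cinner f f = 1" using fn by (simp add: cinner_unit)
  have "y = cinner e y *s e + cinner f y *s f" if y: "y \<in> W" for y
  proof (rule ccontr)
    assume ne: "y \<noteq> cinner e y *s e + cinner f y *s f"
    define w where "w = y - cinner e y *s e - cinner f y *s f"
    have wnz: "w \<noteq> 0" using ne unfolding w_def by (simp add: algebra_simps)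
    have wW: "w \<in> W" unfolding w_def using y e fW W(1) by (auto intro!: vec.subspace_diff vec.subspace_scale)
    have ew: "cinner e w = 0" unfolding w_def by (simp add: cinner_simps ee ef)
    have fw: "cinner f w = 0" unfolding w_def by (simp add: cinner_simps ff fe)
    have we: "cinner w e = 0" using ew by (metis cinner_commute complex_cnj_zero)
    have wf: "cinner w f = 0" using fw by (metis cinner_commute complex_cnj_zero)
    have dist: "e \<noteq> f" "e \<noteq> w" "f \<noteq> w" using ee ef ew ff fw by auto
    have "vec.independent {e, f, w}"
      by (rule orth_indep) (use dist ef fe ew fw we wf e fn wnz in auto)
    then have "card {e, f, w} \<le> vec.dim W"
      by (rule vec.independent_card_le_dim[rotated]) (use e fW wW in auto)
    then show False using dist W(2) by simp
  qed
  then show ?thesis using fW fn ef by blast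
qed

lemma polarization:
  fixes A :: "complex^'n^'n"
  defines "Q \<equiv> \<lambda>z. cinner z (A *v z)"
  shows "cinner x (A *v y) = (Q (x + y) - Q (x - y) - \<i> * (Q (x + \<i> *s y) - Q (x - \<i> *s y))) / 4"
  unfolding Q_def
  by (simp add: matrix_vector_right_distrib matrix_vector_mult_diff_distrib matrix_vector_mult_scale
      cinner_simps algebra_simps)

lemma entry_cinner: "cinner (axis i 1) (A *v axis j 1) = (A :: complex^'n^'n) $ i $ j"
proof -
  have "cinner (axis i 1) v = v $ i" for v :: "complex^'n"
  proof -
    have "cinner (axis i 1) v = (\<Sum>k\<in>UNIV. if k = i then v $ k else 0)"
      unfolding cinner_def by (intro sum.cong) (auto simp: axis_def)
    then show ?thesis by simp
  qed
  moreover have "(A *v axis j 1) $ i = A $ i $ j"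
  proof -
    have "(A *v axis j 1) $ i = (\<Sum>k\<in>UNIV. if k = j then A $ i $ k else 0)"
      unfolding matrix_vector_mult_def vec_lambda_beta by (intro sum.cong) (auto simp: axis_def)
    then show ?thesis by simp
  qed
  ultimately show ?thesis by simp
qed

lemma mono_conv:
  fixes T :: "nat \<Rightarrow> complex^'n^'n"
  assumes pos: "\<And>n. pos_op (T n)"
    and dec: "\<And>n x. Re (cinner x (T (Suc n) *v x)) \<le> Re (cinner x (T n *v x))"
  shows "convergent T"
proof -
  have qconv: "\<exists>l. (\<lambda>n. cinner z (T n *v z)) \<longlonglongrightarrow> l" for z
  proof -
    have "decseq (\<lambda>n. Re (cinner z (T n *v z)))" unfolding decseq_Suc_iff using dec by blast
    moreover have "\<forall>n. 0 \<le> Re (cinner z (T n *v z))" using pos unfolding pos_op_def by blast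
    ultimately obtain L where L: "(\<lambda>n. Re (cinner z (T n *v z))) \<longlonglongrightarrow> L"
      using decseq_convergent by blast
    have "cinner z (T n *v z) = complex_of_real (Re (cinner z (T n *v z)))" for n
      using pos[of n] unfolding pos_op_def by (simp add: complex_eq_iff)
    then have "(\<lambda>n. cinner z (T n *v z)) = (\<lambda>n. complex_of_real (Re (cinner z (T n *v z))))" by simp
    then show ?thesis using tendsto_of_real[OF L] by metis
  qed
  have entry: "\<exists>l. (\<lambda>n. T n $ i $ j) \<longlonglongrightarrow> l" for i j
  proof -
    define x where "x = (axis i 1 :: complex^'n)"
    define y where "y = (axis j 1 :: complex^'n)"
    obtain l1 where l1: "(\<lambda>n. cinner (x + y) (T n *v (x + y))) \<longlonglongrightarrow> l1" using qconv by blast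
    obtain l2 where l2: "(\<lambda>n. cinner (x - y) (T n *v (x - y))) \<longlonglongrightarrow> l2" using qconv by blast
    obtain l3 where l3: "(\<lambda>n. cinner (x + \<i> *s y) (T n *v (x + \<i> *s y))) \<longlonglongrightarrow> l3" using qconv by blast
    obtain l4 where l4: "(\<lambda>n. cinner (x - \<i> *s y) (T n *v (x - \<i> *s y))) \<longlonglongrightarrow> l4" using qconv by blast
    have "(\<lambda>n. T n $ i $ j) = (\<lambda>n. (cinner (x + y) (T n *v (x + y)) - cinner (x - y) (T n *v (x - y))
        - \<i> * (cinner (x + \<i> *s y) (T n *v (x + \<i> *s y)) - cinner (x - \<i> *s y) (T n *v (x - \<i> *s y)))) / 4)"
      unfolding x_def y_def entry_cinner[symmetric] by (subst polarization) simp
    moreover have "(\<lambda>n. (cinner (x + y) (T n *v (x + y)) - cinner (x - y) (T n *v (x - y))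
        - \<i> * (cinner (x + \<i> *s y) (T n *v (x + \<i> *s y)) - cinner (x - \<i> *s y) (T n *v (x - \<i> *s y)))) / 4)
        \<longlonglongrightarrow> (l1 - l2 - \<i> * (l3 - l4)) / 4"
      by (intro tendsto_intros l1 l2 l3 l4) simp
    ultimately show ?thesis by metis
  qed
  then obtain L where L: "\<And>i j. (\<lambda>n. T n $ i $ j) \<longlonglongrightarrow> L i j" by metis
  have "(\<lambda>n. \<chi> i j. T n $ i $ j) \<longlonglongrightarrow> (\<chi> i j. L i j)"
    by (intro tendsto_vec_lambda L)
  then show ?thesis unfolding convergent_def by (auto simp: vec_lambda_eta)
qed

lemma tendsto_mv: "T \<longlonglongrightarrow> L \<Longrightarrow> (\<lambda>n. T n *v x) \<longlonglongrightarrow> L *v (x::complex^'n)"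
  unfolding matrix_vector_mult_def by (intro tendsto_intros)

lemma tendsto_scale_zero: "c \<longlonglongrightarrow> 0 \<Longrightarrow> (\<lambda>n. c n *s v) \<longlonglongrightarrow> (0::complex^'n)"
  by (rule vec_tendstoI) (auto simp: vector_scalar_mult_def intro: tendsto_mult_left_zero)


lemma scaleR_mat_mv: "(r *\<^sub>R A) *v (x::complex^'n) = r *\<^sub>R (A *v x)"
  by (simp add: vec_eq_iff matrix_vector_mult_def scaleR_sum_right)

lemma ip2:
  assumes "cinner e e = 1" "cinner f f = 1" "cinner e f = 0" "cinner f e = 0"
  shows "cinner (\<alpha> *s e + \<beta> *s f) (\<gamma> *s e + \<delta> *s f) = cnj \<alpha> * \<gamma> + cnj \<beta> * \<delta>"
  using assms by (simp add: cinner_simps)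

lemma sandwich_pos:
  fixes R M :: "complex^'n^'n"
  assumes "herm R" "pos_op M"
  shows "pos_op (R ** M ** R)"
proof -
  have "cinner x ((R ** M ** R) *v x) = cinner (R *v x) (M *v (R *v x))" for x
    using assms(1) unfolding herm_def by (simp add: matrix_vector_mul_assoc[symmetric])
  then show ?thesis using assms(2) unfolding pos_op_def by simp
qed

lemma proj_pos:
  fixes e :: "complex^'n"
  assumes "norm e = 1" "0 < \<tau>" "\<tau> < 1"
  shows "pos_op (mat 1 - \<tau> *\<^sub>R ketbra e e)"
  unfolding pos_op_def
proof
  fix y :: "complex^'n"
  have "cinner y ((mat 1 - \<tau> *\<^sub>R ketbra e e) *v y) = cinner y y - of_real \<tau> * (cinner e y * cinner y e)"
    by (simp add: matrix_vector_mult_diff_rdistrib scaleR_mat_mv ketbra_apply cinner_simps)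
  also have "cinner e y * cinner y e = of_real ((cmod (cinner e y))^2)"
    by (metis cinner_commute cnj_mult_self mult.commute)
  also have "cinner y y = of_real ((norm y)^2)" by (rule cinner_self)
  finally have eq: "cinner y ((mat 1 - \<tau> *\<^sub>R ketbra e e) *v y) = of_real ((norm y)^2 - \<tau> * (cmod (cinner e y))^2)"
    by simp
  have "cmod (cinner e y) \<le> norm y" using norm_cinner_le[of e y] assms(1) by simp
  then have "(cmod (cinner e y))^2 \<le> (norm y)^2" by (simp add: power_mono)
  then have "\<tau> * (cmod (cinner e y))^2 \<le> (norm y)^2"
    using assms by (smt (verit) mult_left_le_one_le zero_le_power2)
  then show "Im (cinner y ((mat 1 - \<tau> *\<^sub>R ketbra e e) *v y)) = 0 \<and> 0 \<le> Re (cinner y ((mat 1 - \<tau> *\<^sub>R ketbra e e) *v y))"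
    unfolding eq by simp
qed


theorem corollary4p2:
  fixes e :: "complex^'n" and \<tau> :: real and T0 :: "complex^'n^'n"
    and T :: "nat \<Rightarrow> complex^'n^'n" and K :: "(complex^'n) set"
  assumes "norm e = 1"
    and "0 < \<tau>" and "\<tau> < 1"
    and "strictly_pos_op T0"
    and "T 0 = T0"
    and "\<And>n. T (Suc n) = psqrt (T n) ** (mat 1 - \<tau> *\<^sub>R ketbra e e) ** psqrt (T n)"
    and "K = max_reducing T0 (orth {e})"
    and "vec.dim (orth K) = 2"
  shows "convergent T
    \<and> (\<forall>x\<in>K. lim T *v x = T0 *v x)
    \<and> (\<forall>x\<in>orth K. lim T *v x = 0)"
proof -
  note en = assms(1) and \<tau> = assms(2,3) and T0s = assms(4) and T0 = assms(5) and Tsuc = assms(6)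
  define M where "M = mat 1 - \<tau> *\<^sub>R ketbra e e"
  have Mpos: "pos_op M" unfolding M_def by (rule proj_pos[OF en \<tau>])
  have ee: "cinner e e = 1" using en by (simp add: cinner_unit)
  have T0pos: "pos_op T0" using T0s unfolding strictly_pos_op_def by blast
  have Sx: "vec.subspace (orth {e})" by (rule orth_subspace)
  have redK: "reduces T0 K" and Ksub: "K \<subseteq> orth {e}"
    and Kmax: "\<And>N. reduces T0 N \<Longrightarrow> N \<subseteq> orth {e} \<Longrightarrow> N \<subseteq> K"
    using max_reducing_props[OF Sx, of T0] assms(7) by auto
  have KS: "vec.subspace K" using redK unfolding reduces_def by blast
  have KT0: "T0 *v x \<in> K" if "x \<in> K" for x using redK that unfolding reduces_def by blast
  have oKT0: "T0 *v y \<in> orth K" if "y \<in> orth K" for y using redK that unfolding reduces_def by blast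
  have oKS: "vec.subspace (orth K)" by (rule orth_subspace)
  have Ke: "cinner e x = 0" if "x \<in> K" for x using Ksub that unfolding orth_def by blast
  have eK: "e \<in> orth K" unfolding orth_def using Ke by (auto, metis cinner_commute complex_cnj_zero)
  define R where "R n = psqrt (T n)" for n
  have TsucR: "T (Suc n) = R n ** M ** R n" for n unfolding R_def M_def by (rule Tsuc)
  have Tsuc_apply: "T (Suc n) *v x = R n *v (R n *v x) - (of_real \<tau> * cinner e (R n *v x)) *s (R n *v e)" for n x
    unfolding TsucR M_def matrix_vector_mul_assoc[symmetric]
    by (simp add: matrix_vector_mult_diff_rdistrib scaleR_mat_mv ketbra_apply matrix_vector_mult_diff_distrib
        matrix_vector_mult_scaleR_c matrix_vector_mult_scale scaleR_vec_as_s vector_smult_assoc)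
  have inv: "pos_op (T n) \<and> (\<forall>x\<in>K. T n *v x = T0 *v x) \<and> (\<forall>y\<in>orth K. T n *v y \<in> orth K)" for n
  proof (induction n)
    case 0 then show ?case using T0 T0pos oKT0 by simp
  next
    case (Suc n)
    have pos: "pos_op (T n)" using Suc by blast
    have Rpos: "pos_op (R n)" and RR: "R n ** R n = T n" unfolding R_def using psqrt[OF pos] by auto
    have Rh: "herm (R n)" by (rule pos_op_herm[OF Rpos])
    have TK: "\<forall>x\<in>K. T n *v x \<in> K" using Suc KT0 by simp
    have RK: "R n *v x \<in> K" if "x \<in> K" for x unfolding R_def by (rule psqrt(3)[OF pos KS TK that])
    have RoK: "R n *v y \<in> orth K" if "y \<in> orth K" for y
      unfolding R_def by (rule psqrt(3)[OF pos oKS _ that]) (use Suc in blast)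
    have "pos_op (T (Suc n))" unfolding TsucR by (rule sandwich_pos[OF Rh Mpos])
    moreover have "T (Suc n) *v x = T0 *v x" if x: "x \<in> K" for x
    proof -
      have "cinner e (R n *v x) = 0" using Ke RK x by blast
      then have "T (Suc n) *v x = R n *v (R n *v x)" unfolding Tsuc_apply by simp
      also have "\<dots> = T n *v x" using RR by (simp add: matrix_vector_mul_assoc)
      also have "\<dots> = T0 *v x" using Suc x by blast
      finally show ?thesis .
    qed
    moreover have "T (Suc n) *v y \<in> orth K" if y: "y \<in> orth K" for y
      unfolding Tsuc_apply using RoK y eK oKS by (intro vec.subspace_diff vec.subspace_scale) auto
    ultimately show ?case by blast
  qed
  have Tpos: "pos_op (T n)" for n using inv by blast
  have TK: "T n *v x = T0 *v x" if "x \<in> K" for n x using inv that by blast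
  have ToK: "T n *v y \<in> orth K" if "y \<in> orth K" for n y using inv that by blast
  have Rpos: "pos_op (R n)" and RR: "R n ** R n = T n" for n unfolding R_def using psqrt[OF Tpos] by auto
  have Rh: "herm (R n)" for n by (rule pos_op_herm[OF Rpos])
  have Th: "herm (T n)" for n by (rule pos_op_herm[OF Tpos])
  have RoK: "R n *v y \<in> orth K" if "y \<in> orth K" for n y
    unfolding R_def by (rule psqrt(3)[OF Tpos oKS _ that]) (use ToK in blast)
  have RRx: "R n *v (R n *v x) = T n *v x" for n x using RR by (simp add: matrix_vector_mul_assoc)
  have dec: "Re (cinner x (T (Suc n) *v x)) \<le> Re (cinner x (T n *v x))" for n x
  proof -
    have "cinner x (R n *v e) = cnj (cinner e (R n *v x))"
      using Rh[of n] unfolding herm_def by (metis cinner_commute)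
    define c where "c = cinner e (R n *v x)"
    have "cinner x (T (Suc n) *v x) = cinner x (T n *v x) - of_real \<tau> * (c * cnj c)"
      unfolding Tsuc_apply c_def using \<open>cinner x (R n *v e) = _\<close> by (simp add: cinner_simps RRx)
    moreover have "c * cnj c = of_real ((cmod c)^2)" by (metis complex_norm_square)
    ultimately have "cinner x (T (Suc n) *v x) = cinner x (T n *v x) - of_real (\<tau> * (cmod c)^2)" by simp
    then show ?thesis using \<tau> by simp
  qed
  have convT: "convergent T" by (rule mono_conv[of T, OF Tpos dec])
  then have Tlim: "T \<longlonglongrightarrow> lim T" by (simp add: convergent_LIMSEQ_iff)
  have limx: "(\<lambda>n. T n *v x) \<longlonglongrightarrow> lim T *v x" for x by (rule tendsto_mv[OF Tlim])
  obtain f where f: "f \<in> orth K" "norm f = 1" "cinner e f = 0"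
    and fexp: "\<And>y. y \<in> orth K \<Longrightarrow> y = cinner e y *s e + cinner f y *s f"
    using two_dim_basis[OF oKS assms(8) eK en] by blast
  have ff: "cinner f f = 1" using f(2) by (simp add: cinner_unit)
  have fe: "cinner f e = 0" using f(3) by (metis cinner_commute complex_cnj_zero)
  note ip = ip2[OF ee ff f(3) fe]
  define a where "a n = Re (cinner e (T n *v e))" for n
  define b where "b n = cinner e (T n *v f)" for n
  define d where "d n = Re (cinner f (T n *v f))" for n
  define p where "p n = Re (cinner e (R n *v e))" for n
  define r where "r n = cinner e (R n *v f)" for n
  define m where "m n = Re (cinner f (R n *v f))" for n
  have ca: "cinner e (T n *v e) = of_real (a n)" for n unfolding a_def by (rule herm_eigval_real[OF Th])
  have cd: "cinner f (T n *v f) = of_real (d n)" for n unfolding d_def by (rule herm_eigval_real[OF Th])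
  have cp: "cinner e (R n *v e) = of_real (p n)" for n unfolding p_def by (rule herm_eigval_real[OF Rh])
  have cm: "cinner f (R n *v f) = of_real (m n)" for n unfolding m_def by (rule herm_eigval_real[OF Rh])
  have cfRe: "cinner f (R n *v e) = cnj (r n)" for n
    unfolding r_def using Rh[of n] unfolding herm_def by (metis cinner_commute)
  have cfTe: "cinner f (T n *v e) = cnj (b n)" for n
    unfolding b_def using Th[of n] unfolding herm_def by (metis cinner_commute)
  have Re_: "R n *v e = of_real (p n) *s e + cnj (r n) *s f" for n
    using fexp[OF RoK[OF eK, of n]] unfolding cp cfRe .
  have Rf_: "R n *v f = r n *s e + of_real (m n) *s f" for n
    using fexp[OF RoK[OF f(1), of n]] unfolding cm r_def[symmetric] .
  have Te_: "T n *v e = of_real (a n) *s e + cnj (b n) *s f" for n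
    using fexp[OF ToK[OF eK, of n]] unfolding ca cfTe .
  have Tf_: "T n *v f = b n *s e + of_real (d n) *s f" for n
    using fexp[OF ToK[OF f(1), of n]] unfolding cd b_def[symmetric] .
  have cTR: "cinner x (T n *v y) = cinner (R n *v x) (R n *v y)" for n x y
    using Rh[of n] unfolding herm_def RRx[symmetric] by metis
  have cmod2: "of_real ((cmod z)^2) = cnj z * z" for z by (metis cnj_mult_self)
  have a_eq: "a n = (p n)^2 + (cmod (r n))^2" for n
  proof -
    have "of_real (a n) = cinner (R n *v e) (R n *v e)" unfolding ca[symmetric] cTR ..
    also have "\<dots> = of_real ((p n)^2 + (cmod (r n))^2)"
    proof -
      have "r n * cnj (r n) = of_real ((cmod (r n))^2)" by (metis complex_norm_square)
      then show ?thesis unfolding Re_ ip by (simp add: mult.commute power2_eq_square)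
    qed
    finally show ?thesis by (metis of_real_eq_iff)
  qed
  have d_eq: "d n = (cmod (r n))^2 + (m n)^2" for n
  proof -
    have "of_real (d n) = cinner (R n *v f) (R n *v f)" unfolding cd[symmetric] cTR ..
    also have "\<dots> = of_real ((cmod (r n))^2 + (m n)^2)"
    proof -
      have "r n * cnj (r n) = of_real ((cmod (r n))^2)" by (metis complex_norm_square)
      then show ?thesis unfolding Rf_ ip by (simp add: mult.commute power2_eq_square)
    qed
    finally show ?thesis by (metis of_real_eq_iff)
  qed
  have b_eq: "b n = r n * of_real (p n + m n)" for n
  proof -
    have "b n = cinner (R n *v e) (R n *v f)" unfolding b_def cTR ..
    also have "\<dots> = r n * of_real (p n + m n)" unfolding Re_ Rf_ ip by (simp add: algebra_simps)
    finally show ?thesis .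
  qed
  have p0: "p n \<ge> 0" and m0: "m n \<ge> 0" for n
    unfolding p_def m_def using Rpos[of n] unfolding pos_op_def by blast+
  have rpm: "(cmod (r n))^2 \<le> p n * m n" for n
    unfolding r_def p_def m_def by (rule pos_cs[OF Rpos])
  have a_suc: "a (Suc n) = a n - \<tau> * (p n)^2" for n
  proof -
    have "of_real (a (Suc n)) = cinner e (T (Suc n) *v e)" by (rule ca[symmetric])
    also have "\<dots> = of_real (a n - \<tau> * (p n)^2)"
      unfolding Tsuc_apply RRx by (simp add: cinner_simps ca cp power2_eq_square)
    finally show ?thesis by (metis of_real_eq_iff)
  qed
  have d_suc: "d (Suc n) = d n - \<tau> * (cmod (r n))^2" for n
  proof -
    have "of_real (d (Suc n)) = cinner f (T (Suc n) *v f)" by (rule cd[symmetric])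
    also have "\<dots> = of_real (d n) - of_real \<tau> * (r n * cnj (r n))"
      unfolding Tsuc_apply RRx by (simp add: cinner_simps cd cfRe r_def[symmetric])
    also have "r n * cnj (r n) = of_real ((cmod (r n))^2)" by (metis complex_norm_square)
    finally show ?thesis by (metis of_real_diff of_real_mult of_real_eq_iff)
  qed
  have b_suc: "b (Suc n) = b n - of_real (\<tau> * p n) * r n" for n
    unfolding b_def Tsuc_apply RRx by (simp add: cinner_simps cp r_def[symmetric] b_def[symmetric])
  have e0: "e \<noteq> 0" using en by auto
  have apos0: "a 0 > 0"
    using T0s e0 unfolding strictly_pos_op_def a_def T0 by blast
  have D0: "a 0 * d 0 - (cmod (b 0))^2 > 0"
  proof -
    define x where "x = (- b 0) *s e + of_real (a 0) *s f"
    have xnz: "x \<noteq> 0"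
    proof
      assume "x = 0"
      then have "cinner f x = 0" by simp
      then have "of_real (a 0) = (0::complex)" unfolding x_def by (simp add: cinner_simps fe ff)
      then show False using apos0 by simp
    qed
    have "T 0 *v x = (- b 0) *s (T 0 *v e) + of_real (a 0) *s (T 0 *v f)"
      unfolding x_def by (simp add: matrix_vector_right_distrib matrix_vector_mult_diff_distrib matrix_vector_mult_scale)
    also have "\<dots> = of_real (a 0 * d 0 - (cmod (b 0))^2) *s f"
    proof -
      have hb: "(complex_of_real (cmod (b 0)))^2 = b 0 * cnj (b 0)" by (metis complex_norm_square of_real_power)
      show ?thesis unfolding Te_ Tf_ by (simp add: vec_eq_iff vector_scalar_mult_def algebra_simps hb)
    qed
    finally have Tx: "T 0 *v x = of_real (a 0 * d 0 - (cmod (b 0))^2) *s f" .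
    have xf: "cinner x f = of_real (a 0)" unfolding x_def by (simp add: cinner_simps ff f(3))
    have "cinner x (T 0 *v x) = of_real (a 0 * (a 0 * d 0 - (cmod (b 0))^2))"
      unfolding Tx cinner_scale_right xf by simp
    moreover have "Re (cinner x (T0 *v x)) > 0" using T0s xnz unfolding strictly_pos_op_def by blast
    ultimately have "a 0 * (a 0 * d 0 - (cmod (b 0))^2) > 0" using T0 by simp
    then show ?thesis using apos0 by (simp add: zero_less_mult_iff)
  qed
  have b0: "b 0 \<noteq> 0"
  proof
    assume bz: "b 0 = 0"
    have T0f: "T0 *v f = of_real (d 0) *s f" using Tf_[of 0] bz T0 by simp
    have T0e: "T0 *v e = of_real (a 0) *s e" using Te_[of 0] bz T0 by simp
    define N where "N = {k + c *s f | k c. k \<in> K}"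
    have NS: "vec.subspace N"
      unfolding vec.subspace_def N_def
    proof (intro conjI ballI allI)
      show "0 \<in> {k + c *s f | k c. k \<in> K}" using KS by (auto intro!: exI[of _ 0] simp: vec.subspace_0)
      fix x y assume "x \<in> {k + c *s f | k c. k \<in> K}" "y \<in> {k + c *s f | k c. k \<in> K}"
      then obtain k1 c1 k2 c2 where "x = k1 + c1 *s f" "y = k2 + c2 *s f" "k1 \<in> K" "k2 \<in> K" by blast
      then show "x + y \<in> {k + c *s f | k c. k \<in> K}"
        using KS by (auto intro!: exI[of _ "k1 + k2"] exI[of _ "c1 + c2"] simp: vec.subspace_add algebra_simps vector_sadd_rdistrib)
    next
      fix c x assume "x \<in> {k + c *s f | k c. k \<in> K}"
      then obtain k1 c1 where "x = k1 + c1 *s f" "k1 \<in> K" by blast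
      then show "c *s x \<in> {k + c *s f | k c. k \<in> K}"
        using KS by (auto intro!: exI[of _ "c *s k1"] exI[of _ "c * c1"] simp: vec.subspace_scale vector_sadd_rdistrib vector_add_ldistrib vector_smult_assoc)
    qed
    have NT: "T0 *v x \<in> N" if "x \<in> N" for x
    proof -
      obtain k c where kc: "x = k + c *s f" "k \<in> K" using \<open>x \<in> N\<close> unfolding N_def by blast
      have "T0 *v x = T0 *v k + (c * of_real (d 0)) *s f"
        unfolding kc by (simp add: matrix_vector_right_distrib matrix_vector_mult_scale T0f vector_smult_assoc)
      then show ?thesis unfolding N_def using KT0[OF kc(2)] by blast
    qed
    have oN: "y \<in> orth N \<Longrightarrow> y = cinner e y *s e" for y
    proof -
      assume y: "y \<in> orth N"
      have "y \<in> orth K" using y unfolding orth_def N_def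
        by (auto, metis (mono_tags) add.right_neutral vector_smult_lzero)
      moreover have "cinner f y = 0" using y KS unfolding orth_def N_def
        by (auto, metis (mono_tags) add_0 vec.subspace_0 vector_smult_lid)
      ultimately show ?thesis using fexp by fastforce
    qed
    have eN: "e \<in> orth N"
      unfolding orth_def N_def
    proof (safe)
      fix k c assume "k \<in> K"
      have "cinner k e = 0" using Ke[OF \<open>k \<in> K\<close>] by (metis cinner_commute complex_cnj_zero)
      then show "cinner (k + c *s f) e = 0" by (simp add: cinner_simps fe)
    qed
    have "reduces T0 N"
      unfolding reduces_def
    proof (intro conjI)
      show "vec.subspace N" by (rule NS)
      show "(\<lambda>x. T0 *v x) ` N \<subseteq> N" using NT by blast
      show "(\<lambda>x. T0 *v x) ` orth N \<subseteq> orth N"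
      proof
        fix z assume "z \<in> (\<lambda>x. T0 *v x) ` orth N"
        then obtain y where y: "y \<in> orth N" "z = T0 *v y" by blast
        have "z = (cinner e y * of_real (a 0)) *s e"
          unfolding y(2) by (subst oN[OF y(1)]) (simp add: matrix_vector_mult_scale T0e vector_smult_assoc)
        then show "z \<in> orth N" using eN orth_subspace[of N] by (simp add: vec.subspace_scale)
      qed
    qed
    moreover have "N \<subseteq> orth {e}"
      unfolding N_def orth_def using Ke by (auto simp: cinner_simps f(3))
    ultimately have "N \<subseteq> K" by (rule Kmax)
    moreover have "f \<in> N"
    proof -
      have "f = 0 + 1 *s f" by simp
      then show ?thesis unfolding N_def using vec.subspace_0[OF KS] by blast
    qed
    ultimately have "f \<in> K" by blast
    then have "cinner f f = 0" using f(1) unfolding orth_def by blast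
    then show False using ff by simp
  qed
  have lims: "a \<longlonglongrightarrow> 0" "b \<longlonglongrightarrow> 0" "d \<longlonglongrightarrow> 0"
    using scalar_main[OF \<tau> a_eq d_eq b_eq p0 m0 rpm a_suc b_suc d_suc D0 b0] by blast+
  have "lim T *v x = T0 *v x" if "x \<in> K" for x
  proof -
    have "(\<lambda>n. T n *v x) \<longlonglongrightarrow> T0 *v x" using TK[OF that] by simp
    then show ?thesis using limx[of x] LIMSEQ_unique by blast
  qed
  moreover have "lim T *v y = 0" if y: "y \<in> orth K" for y
  proof -
    have "T n *v y = (cinner e y * of_real (a n) + cinner f y * b n) *s e
        + (cinner e y * cnj (b n) + cinner f y * of_real (d n)) *s f" for n
    proof -
      have "T n *v y = cinner e y *s (T n *v e) + cinner f y *s (T n *v f)"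
        by (subst fexp[OF y]) (simp add: matrix_vector_right_distrib matrix_vector_mult_scale)
      then show ?thesis unfolding Te_ Tf_ by (simp add: vec_eq_iff vector_scalar_mult_def algebra_simps)
    qed
    moreover have "(\<lambda>n. (cinner e y * of_real (a n) + cinner f y * b n) *s e
        + (cinner e y * cnj (b n) + cinner f y * of_real (d n)) *s f) \<longlonglongrightarrow> 0"
    proof -
      have c1: "(\<lambda>n. cinner e y * of_real (a n) + cinner f y * b n) \<longlonglongrightarrow> 0"
        using lims by (auto intro!: tendsto_eq_intros)
      have c2: "(\<lambda>n. cinner e y * cnj (b n) + cinner f y * of_real (d n)) \<longlonglongrightarrow> 0"
        using lims by (auto intro!: tendsto_eq_intros)
      show ?thesis using tendsto_add[OF tendsto_scale_zero[OF c1] tendsto_scale_zero[OF c2]] by simp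
    qed
    ultimately have "(\<lambda>n. T n *v y) \<longlonglongrightarrow> 0" by simp
    then show ?thesis using limx[of y] LIMSEQ_unique by blast
  qed
  ultimately show ?thesis using convT by blast
qed

end
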